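(* Let $T\in\mathbb{N}$. Consider random regressors $M_t\in\mathbb{R}^{m\times n}$, outputs $y_{t+1}\in\mathbb{R}^m$ and noise $w_t\in\mathbb{R}^m$ with $y_{t+1}=M_t\theta^\star+w_t$ for $t=0,\dots,T-1$, where $\theta^\star\in\mathbb{R}^n$ is deterministic. Let $\mathcal{D}_t=\{M_0,y_1,M_1,\dots,y_t,M_t\}$, $W\succ0$ a symmetric positive definite $m\times m$ matrix, $V_T=\sum_{k=0}^{T-1}M_k^\top W M_k$, and, when $V_T$ is invertible, let $\hat\theta_T = V_T^{-1}\sum_{k=0}^{T-1}M_k^\top W y_{k+1}$ be the (weighted) ordinary least squares estimate. Assume that for a known $c_w>0$ and all $t\in\{0,\dots,T-1\}$, $\mathbb{E}[e^{\nu^\top w_t}\mid\mathcal{D}_t]\le e^{\frac12 c_w^2\nu^\top W^{-1}\nu}$ for all $\nu\in\mathbb{R}^m$. Assume further that $\mathbb{E}[V_T]\succ 0$ and that, for some deterministic $\varepsilon\in(0,1)$ and some $\delta'\in(0,1)$, $$(1-\varepsilon)\mathbb{E}[V_T]\preceq V_T\preceq(1+\varepsilon)\mathbb{E}[V_T]$$ holds with probability at least $1-\delta'$. Then for any $\delta\in(0,1)$, with probability at least $1-(\delta+\delta')$, $$\|\theta^\star-\hat\theta_T\|_{V_T}\le c_w\sqrt{2n\log\left(\frac{2}{1-\varepsilon}\right)+4\log(1/\delta)}.$$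
   Context: For a symmetric positive semidefinite $A$, $\|x\|_A=\sqrt{x^\top A x}$. $A\preceq B$ means $B-A$ is positive semidefinite. *)

theory Defs
  imports "HOL-Probability.Probability"
begin

definition psd :: "real^'n^'n \<Rightarrow> bool" where
  "psd A \<longleftrightarrow> transpose A = A \<and> (\<forall>x. 0 \<le> x \<bullet> (A *v x))"

definition pd :: "real^'n^'n \<Rightarrow> bool" where
  "pd A \<longleftrightarrow> transpose A = A \<and> (\<forall>x. x \<noteq> 0 \<longrightarrow> 0 < x \<bullet> (A *v x))"

definition loewner_le :: "real^'n^'n \<Rightarrow> real^'n^'n \<Rightarrow> bool" where
  "loewner_le A B \<longleftrightarrow> psd (B - A)"

definition A_norm :: "real^'n^'n \<Rightarrow> real^'n \<Rightarrow> real" where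
  "A_norm A x = sqrt (x \<bullet> (A *v x))"

definition data_sigma ::
  "'a measure \<Rightarrow> (nat \<Rightarrow> 'a \<Rightarrow> real^'n^'m) \<Rightarrow> (nat \<Rightarrow> 'a \<Rightarrow> real^'m) \<Rightarrow> nat \<Rightarrow> 'a measure" where
  "data_sigma M Mx y t = sigma (space M)
     ({Mx k -` A \<inter> space M | k A. k \<le> t \<and> A \<in> sets borel} \<union>
      {y (Suc k) -` B \<inter> space M | k B. k < t \<and> B \<in> sets borel})"

definition gram :: "real^'m^'m \<Rightarrow> (nat \<Rightarrow> 'a \<Rightarrow> real^'n^'m) \<Rightarrow> nat \<Rightarrow> 'a \<Rightarrow> real^'n^'n" where
  "gram W Mx T x = (\<Sum>k<T. transpose (Mx k x) ** W ** Mx k x)"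

definition ols :: "real^'m^'m \<Rightarrow> (nat \<Rightarrow> 'a \<Rightarrow> real^'n^'m) \<Rightarrow> (nat \<Rightarrow> 'a \<Rightarrow> real^'m) \<Rightarrow> nat \<Rightarrow> 'a \<Rightarrow> real^'n" where
  "ols W Mx y T x = matrix_inv (gram W Mx T x) *v (\<Sum>k<T. transpose (Mx k x) *v (W *v y (Suc k) x))"

end

theory Submission
  imports Defs
begin

lemma meas_vec_nth[measurable (raw)]:
  fixes f :: "'a \<Rightarrow> 'b::euclidean_space^'n"
  assumes "f \<in> borel_measurable M"
  shows "(\<lambda>x. f x $ i) \<in> borel_measurable M"
proof -
  have "(\<lambda>v::'b^'n. v $ i) \<in> borel_measurable borel"
    by (intro borel_measurable_continuous_onI linear_continuous_on bounded_linear_vec_nth)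
  from measurable_compose[OF assms this] show ?thesis by simp
qed

lemma meas_vecI:
  fixes f :: "'a \<Rightarrow> 'b::euclidean_space^'n"
  assumes "\<And>i. (\<lambda>x. f x $ i) \<in> borel_measurable M"
  shows "f \<in> borel_measurable M"
proof (subst borel_measurable_euclidean_space, intro ballI)
  fix b :: "'b^'n" assume "b \<in> Basis"
  then obtain i u where b: "b = axis i u" "u \<in> Basis" by (auto simp: Basis_vec_def)
  have "(\<lambda>x. f x $ i \<bullet> u) \<in> borel_measurable M"
    using assms by (intro borel_measurable_inner) auto
  then show "(\<lambda>x. f x \<bullet> b) \<in> borel_measurable M" by (simp add: b inner_axis)
qed

lemma meas_mv[measurable (raw)]:
  fixes f :: "'a \<Rightarrow> real^'n^'m" and g :: "'a \<Rightarrow> real^'n"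
  assumes "f \<in> borel_measurable M" "g \<in> borel_measurable M"
  shows "(\<lambda>x. f x *v g x) \<in> borel_measurable M"
  unfolding matrix_vector_mult_def
  by (intro meas_vecI) (simp, intro borel_measurable_sum borel_measurable_times meas_vec_nth assms)

lemma meas_mm[measurable (raw)]:
  fixes f :: "'a \<Rightarrow> real^'n^'m" and g :: "'a \<Rightarrow> real^'k^'n"
  assumes "f \<in> borel_measurable M" "g \<in> borel_measurable M"
  shows "(\<lambda>x. f x ** g x) \<in> borel_measurable M"
  unfolding matrix_matrix_mult_def
  by (intro meas_vecI) (simp, intro borel_measurable_sum borel_measurable_times meas_vec_nth assms)

lemma meas_transpose[measurable (raw)]:
  fixes f :: "'a \<Rightarrow> real^'n^'m"
  assumes "f \<in> borel_measurable M"
  shows "(\<lambda>x. transpose (f x)) \<in> borel_measurable M"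
  unfolding transpose_def
  by (intro meas_vecI) (simp, intro meas_vec_nth assms)

lemma key_simple:
  fixes Y :: "'a \<Rightarrow> real" and s :: "'a \<Rightarrow> real^'m" and w :: "'a \<Rightarrow> real^'m"
  assumes fm: "finite_measure_subalgebra M F"
    and Y: "Y \<in> borel_measurable F" "\<And>x. 0 \<le> Y x"
    and s: "simple_function F s"
    and w[measurable]: "w \<in> borel_measurable M"
    and q[measurable]: "q \<in> borel_measurable borel"
    and ce: "\<And>v. AE x in M. nn_cond_exp M F (\<lambda>x. ennreal (exp (v \<bullet> w x))) x \<le> ennreal (exp (q v))"
  shows "(\<integral>\<^sup>+x. ennreal (Y x * exp (s x \<bullet> w x - q (s x))) \<partial>M) \<le> (\<integral>\<^sup>+x. ennreal (Y x) \<partial>M)"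
proof -
  interpret finite_measure_subalgebra M F by (rule fm)
  have spF: "space F = space M" using subalg by (simp add: subalgebra_def)
  define R where "R = s ` space F"
  have finR: "finite R" using s by (simp add: simple_function_def R_def)
  define A where "A v = s -` {v} \<inter> space F" for v
  have AF: "A v \<in> sets F" for v using s by (simp add: A_def simple_functionD)
  have sF: "s \<in> borel_measurable F" using s by (rule borel_measurable_simple_function)
  have YM[measurable]: "Y \<in> borel_measurable M" by (rule measurable_from_subalg[OF subalg Y(1)])
  have AM[measurable]: "A v \<in> sets M" for v using AF subalg by (auto simp: subalgebra_def)
  define g where "g v x = ennreal (Y x * exp (- q v)) * indicator (A v) x" for v x
  have gF: "g v \<in> borel_measurable F" for v
    unfolding g_def using Y(1) AF by measurable
  have gM[measurable]: "g v \<in> borel_measurable M" for v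
    by (rule measurable_from_subalg[OF subalg gF])
  have pt: "ennreal (Y x * exp (s x \<bullet> w x - q (s x))) = (\<Sum>v\<in>R. g v x * ennreal (exp (v \<bullet> w x)))"
    if x: "x \<in> space M" for x
  proof -
    have ind: "indicator (A v) x = (if v = s x then 1 else 0 :: ennreal)" for v
      using x spF by (auto simp: A_def indicator_def)
    have "(\<Sum>v\<in>R. g v x * ennreal (exp (v \<bullet> w x))) =
          (\<Sum>v\<in>R. if v = s x then ennreal (Y x * exp (- q v)) * ennreal (exp (v \<bullet> w x)) else 0)"
      by (intro sum.cong) (auto simp: g_def ind)
    also have "\<dots> = ennreal (Y x * exp (- q (s x))) * ennreal (exp (s x \<bullet> w x))"
      using finR x spF by (simp add: R_def)
    also have "\<dots> = ennreal (Y x * exp (s x \<bullet> w x - q (s x)))"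
      using Y(2)[of x] by (simp add: ennreal_mult'[symmetric] exp_diff exp_minus field_simps)
    finally show ?thesis by simp
  qed
  have "(\<integral>\<^sup>+x. ennreal (Y x * exp (s x \<bullet> w x - q (s x))) \<partial>M)
       = (\<integral>\<^sup>+x. (\<Sum>v\<in>R. g v x * ennreal (exp (v \<bullet> w x))) \<partial>M)"
    by (intro nn_integral_cong) (simp add: pt)
  also have "\<dots> = (\<Sum>v\<in>R. \<integral>\<^sup>+x. g v x * ennreal (exp (v \<bullet> w x)) \<partial>M)"
    by (intro nn_integral_sum) measurable
  also have "\<dots> = (\<Sum>v\<in>R. \<integral>\<^sup>+x. g v x * nn_cond_exp M F (\<lambda>x. ennreal (exp (v \<bullet> w x))) x \<partial>M)"
    by (intro sum.cong refl nn_cond_exp_intg[symmetric] gF) measurable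
  also have "\<dots> \<le> (\<Sum>v\<in>R. \<integral>\<^sup>+x. g v x * ennreal (exp (q v)) \<partial>M)"
  proof (intro sum_mono nn_integral_mono_AE)
    fix v
    show "AE x in M. g v x * nn_cond_exp M F (\<lambda>x. ennreal (exp (v \<bullet> w x))) x \<le> g v x * ennreal (exp (q v))"
      using ce[of v] by eventually_elim (rule mult_left_mono, auto)
  qed
  also have "\<dots> = (\<Sum>v\<in>R. \<integral>\<^sup>+x. ennreal (Y x) * indicator (A v) x \<partial>M)"
  proof (intro sum.cong refl nn_integral_cong)
    fix v x
    have "ennreal (Y x * exp (- q v)) * ennreal (exp (q v)) = ennreal (Y x)"
      using Y(2)[of x] by (simp add: ennreal_mult'[symmetric] exp_minus field_simps)
    moreover have "g v x * ennreal (exp (q v)) = (ennreal (Y x * exp (- q v)) * ennreal (exp (q v))) * indicator (A v) x"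
      by (simp add: g_def ac_simps)
    ultimately show "g v x * ennreal (exp (q v)) = ennreal (Y x) * indicator (A v) x"
      by simp
  qed
  also have "\<dots> = (\<integral>\<^sup>+x. (\<Sum>v\<in>R. ennreal (Y x) * indicator (A v) x) \<partial>M)"
    by (intro nn_integral_sum[symmetric]) measurable
  also have "\<dots> = (\<integral>\<^sup>+x. ennreal (Y x) \<partial>M)"
  proof (intro nn_integral_cong)
    fix x assume x: "x \<in> space M"
    have ind: "indicator (A v) x = (if v = s x then 1 else 0 :: ennreal)" for v
      using x spF by (auto simp: A_def indicator_def)
    have "(\<Sum>v\<in>R. ennreal (Y x) * indicator (A v) x) = (\<Sum>v\<in>R. if v = s x then ennreal (Y x) else 0)"
      by (intro sum.cong) (auto simp: ind)
    also have "\<dots> = ennreal (Y x)" using finR x spF by (simp add: R_def)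
    finally show "(\<Sum>v\<in>R. ennreal (Y x) * indicator (A v) x) = ennreal (Y x)" .
  qed
  finally show ?thesis .
qed

lemma key_random:
  fixes Y :: "'a \<Rightarrow> real" and \<nu> :: "'a \<Rightarrow> real^'m" and w :: "'a \<Rightarrow> real^'m"
  assumes fm: "finite_measure_subalgebra M F"
    and Y: "Y \<in> borel_measurable F" "\<And>x. 0 \<le> Y x"
    and nu: "\<nu> \<in> borel_measurable F"
    and w[measurable]: "w \<in> borel_measurable M"
    and q: "continuous_on UNIV q"
    and ce: "\<And>v. AE x in M. nn_cond_exp M F (\<lambda>x. ennreal (exp (v \<bullet> w x))) x \<le> ennreal (exp (q v))"
  shows "(\<integral>\<^sup>+x. ennreal (Y x * exp (\<nu> x \<bullet> w x - q (\<nu> x))) \<partial>M) \<le> (\<integral>\<^sup>+x. ennreal (Y x) \<partial>M)"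
proof -
  interpret finite_measure_subalgebra M F by (rule fm)
  have spF: "space F = space M" using subalg by (simp add: subalgebra_def)
  have qm[measurable]: "q \<in> borel_measurable borel" using q by (rule borel_measurable_continuous_onI)
  obtain S where S: "\<And>i. simple_function F (S i)" "\<And>x. x \<in> space F \<Longrightarrow> (\<lambda>i. S i x) \<longlonglongrightarrow> \<nu> x"
    using borel_measurable_implies_sequence_metric[OF nu, of 0] by blast
  have YM[measurable]: "Y \<in> borel_measurable M" by (rule measurable_from_subalg[OF subalg Y(1)])
  have SM[measurable]: "S i \<in> borel_measurable M" for i
    by (rule measurable_from_subalg[OF subalg borel_measurable_simple_function[OF S(1)]])
  have nuM[measurable]: "\<nu> \<in> borel_measurable M" by (rule measurable_from_subalg[OF subalg nu])
  define f where "f i x = ennreal (Y x * exp (S i x \<bullet> w x - q (S i x)))" for i x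
  have fM[measurable]: "f i \<in> borel_measurable M" for i unfolding f_def by measurable
  have lim: "liminf (\<lambda>i. f i x) = ennreal (Y x * exp (\<nu> x \<bullet> w x - q (\<nu> x)))" if x: "x \<in> space M" for x
  proof (rule lim_imp_Liminf[OF trivial_limit_sequentially])
    have "(\<lambda>i. S i x) \<longlonglongrightarrow> \<nu> x" using S(2) x spF by auto
    moreover have "isCont q (\<nu> x)" using q by (simp add: continuous_on_eq_continuous_at)
    ultimately have "(\<lambda>i. q (S i x)) \<longlonglongrightarrow> q (\<nu> x)" by (rule isCont_tendsto_compose[rotated])
    with \<open>(\<lambda>i. S i x) \<longlonglongrightarrow> \<nu> x\<close> show "(\<lambda>i. f i x) \<longlonglongrightarrow> ennreal (Y x * exp (\<nu> x \<bullet> w x - q (\<nu> x)))"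
      unfolding f_def by (intro tendsto_ennrealI tendsto_intros)
  qed
  have "(\<integral>\<^sup>+x. ennreal (Y x * exp (\<nu> x \<bullet> w x - q (\<nu> x))) \<partial>M) = (\<integral>\<^sup>+x. liminf (\<lambda>i. f i x) \<partial>M)"
    by (intro nn_integral_cong) (simp add: lim)
  also have "\<dots> \<le> liminf (\<lambda>i. integral\<^sup>N M (f i))"
    by (rule nn_integral_liminf) simp
  also have "\<dots> \<le> (\<integral>\<^sup>+x. ennreal (Y x) \<partial>M)"
  proof -
    have "\<forall>i. integral\<^sup>N M (f i) \<le> (\<integral>\<^sup>+x. ennreal (Y x) \<partial>M)"
      unfolding f_def using key_simple[OF fm Y S(1) w qm ce] by blast
    then have "limsup (\<lambda>i. integral\<^sup>N M (f i)) \<le> (\<integral>\<^sup>+x. ennreal (Y x) \<partial>M)"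
      by (intro Limsup_bounded) auto
    then show ?thesis using Liminf_le_Limsup[OF trivial_limit_sequentially] order_trans by blast
  qed
  finally show ?thesis .
qed

lemma pd_inj: "pd A \<Longrightarrow> inj ((*v) A)"
  unfolding vec.inj_iff_eq_0 pd_def by (metis inner_zero_right less_irrefl)

lemma pd_invertible: "pd (A::real^'n^'n) \<Longrightarrow> invertible A"
  by (metis invertible_def matrix_left_invertible_injective matrix_left_right_inverse pd_inj)

lemma matrix_inv_both:
  assumes "invertible (A::real^'n^'n)"
  shows "A ** matrix_inv A = mat 1 \<and> matrix_inv A ** A = mat 1"
  using assms unfolding invertible_def matrix_inv_def by (rule someI_ex)

lemma matrix_inv_cancel: "invertible (A::real^'n^'n) \<Longrightarrow> matrix_inv A *v (A *v v) = v"
  using matrix_inv_both by (metis matrix_vector_mul_assoc matrix_vector_mul_lid)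

lemma matrix_inv_cancel2: "invertible (A::real^'n^'n) \<Longrightarrow> A *v (matrix_inv A *v v) = v"
  using matrix_inv_both by (metis matrix_vector_mul_assoc matrix_vector_mul_lid)

lemma cont_quad: "continuous_on UNIV (\<lambda>v::real^'n. c * (v \<bullet> (A *v v)))"
  by (intro continuous_intros matrix_vector_mult_linear_continuous_on continuous_on_id)

locale ols_setup =
  fixes M :: "'a measure" and T :: nat
    and Mx :: "nat \<Rightarrow> 'a \<Rightarrow> real^'n^'m"
    and y w :: "nat \<Rightarrow> 'a \<Rightarrow> real^'m"
    and \<theta> :: "real^'n" and W :: "real^'m^'m"
    and cw :: real
  assumes prob: "prob_space M"
    and Mx_meas: "\<forall>k<T. Mx k \<in> borel_measurable M"
    and w_meas: "\<forall>k<T. w k \<in> borel_measurable M"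
    and y_eq: "\<forall>t<T. \<forall>x\<in>space M. y (Suc t) x = Mx t x *v \<theta> + w t x"
    and pdW: "pd W" and cw_pos: "0 < cw"
    and subg: "\<forall>t<T. \<forall>\<nu>. AE x in M.
           nn_cond_exp M (data_sigma M Mx y t) (\<lambda>x. ennreal (exp (\<nu> \<bullet> w t x))) x
             \<le> ennreal (exp (1/2 * cw\<^sup>2 * (\<nu> \<bullet> (matrix_inv W *v \<nu>))))"
begin

abbreviation "F t \<equiv> data_sigma M Mx y t"

lemma Mx_M[measurable]: "k < T \<Longrightarrow> Mx k \<in> borel_measurable M" using Mx_meas by auto
lemma w_M[measurable]: "k < T \<Longrightarrow> w k \<in> borel_measurable M" using w_meas by auto

lemma y_M[measurable]: "k < T \<Longrightarrow> y (Suc k) \<in> borel_measurable M"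
proof -
  assume k: "k < T"
  have "(\<lambda>x. Mx k x *v \<theta> + w k x) \<in> borel_measurable M" using k by measurable
  then show ?thesis by (rule measurable_cong[THEN iffD1, rotated]) (use y_eq k in auto)
qed

definition "gens t = {Mx k -` A \<inter> space M | k A. k \<le> t \<and> A \<in> sets borel} \<union>
      {y (Suc k) -` B \<inter> space M | k B. k < t \<and> B \<in> sets borel}"

lemma F_def': "F t = sigma (space M) (gens t)" by (simp add: data_sigma_def gens_def)

lemma gens_Pow: "gens t \<subseteq> Pow (space M)" by (auto simp: gens_def)

lemma space_F[simp]: "space (F t) = space M" by (simp add: F_def' space_measure_of_conv)

lemma sets_F: "sets (F t) = sigma_sets (space M) (gens t)"
  by (simp add: F_def' gens_Pow)

lemma subalg_F: "t < T \<Longrightarrow> subalgebra M (F t)"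
proof -
  assume t: "t < T"
  have "gens t \<subseteq> sets M"
  proof
    fix X assume "X \<in> gens t"
    then show "X \<in> sets M" unfolding gens_def
    proof (elim UnE CollectE exE conjE)
      fix k A assume "X = Mx k -` A \<inter> space M" "k \<le> t" "A \<in> sets borel"
      then show ?thesis using t by (auto intro: measurable_sets[OF Mx_M])
    next
      fix k A assume "X = y (Suc k) -` A \<inter> space M" "k < t" "A \<in> sets borel"
      then show ?thesis using t by (auto intro: measurable_sets[OF y_M])
    qed
  qed
  then show ?thesis unfolding subalgebra_def sets_F
    by (simp add: sets.sigma_sets_subset)
qed

lemma fms_F: "t < T \<Longrightarrow> finite_measure_subalgebra M (F t)"
  unfolding finite_measure_subalgebra_def finite_measure_subalgebra_axioms_def
  using subalg_F prob prob_space.finite_measure by blast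

lemma Mx_F: "k \<le> t \<Longrightarrow> Mx k \<in> borel_measurable (F t)"
proof (rule measurableI)
  fix A :: "(real^'n^'m) set" assume "k \<le> t" "A \<in> sets borel"
  then have "Mx k -` A \<inter> space M \<in> gens t" by (auto simp: gens_def)
  then show "Mx k -` A \<inter> space (F t) \<in> sets (F t)" by (simp add: sets_F)
qed simp

lemma y_F: "k < t \<Longrightarrow> y (Suc k) \<in> borel_measurable (F t)"
proof (rule measurableI)
  fix A :: "(real^'m) set" assume "k < t" "A \<in> sets borel"
  then have "y (Suc k) -` A \<inter> space M \<in> gens t" by (auto simp: gens_def)
  then show "y (Suc k) -` A \<inter> space (F t) \<in> sets (F t)" by (simp add: sets_F)
qed simp

lemma w_F: "k < t \<Longrightarrow> t < T \<Longrightarrow> w k \<in> borel_measurable (F t)"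
proof -
  assume k: "k < t" "t < T"
  have "(\<lambda>x. y (Suc k) x - Mx k x *v (\<theta>::real^'n)) \<in> borel_measurable (F t)"
    using y_F[OF k(1)] Mx_F[of k t] k by (intro borel_measurable_diff meas_mv) auto
  then show ?thesis by (rule measurable_cong[THEN iffD1, rotated]) (use y_eq k in auto)
qed


definition Zt :: "nat \<Rightarrow> real^'n \<Rightarrow> 'a \<Rightarrow> real" where
  "Zt t l x = exp (\<Sum>k<t. (W *v (Mx k x *v l)) \<bullet> w k x - 1/2*cw\<^sup>2*((Mx k x *v l) \<bullet> (W *v (Mx k x *v l))))"

lemma Zt_F: "t < T \<Longrightarrow> Zt t l \<in> borel_measurable (F t)"
proof -
  assume t: "t < T"
  have [measurable]: "k \<in> {..<t} \<Longrightarrow> Mx k \<in> borel_measurable (F t)" for k using Mx_F by auto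
  have [measurable]: "k \<in> {..<t} \<Longrightarrow> w k \<in> borel_measurable (F t)" for k using w_F t by auto
  show ?thesis unfolding Zt_def by measurable
qed

lemma Z_bound: "t \<le> T \<Longrightarrow> (\<integral>\<^sup>+x. ennreal (Zt t l x) \<partial>M) \<le> 1"
proof (induction t)
  case 0
  then show ?case using prob_space.emeasure_space_1[OF prob] by (simp add: Zt_def)
next
  case (Suc t)
  then have t: "t < T" by simp
  have invW: "invertible W" using pdW by (rule pd_invertible)
  define q where "q v = 1/2 * cw\<^sup>2 * (v \<bullet> (matrix_inv W *v v))" for v :: "real^'m"
  define \<nu> where "\<nu> x = W *v (Mx t x *v l)" for x
  have eq: "Zt (Suc t) l x = Zt t l x * exp (\<nu> x \<bullet> w t x - q (\<nu> x))" for x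
  proof -
    have "q (\<nu> x) = 1/2*cw\<^sup>2*((Mx t x *v l) \<bullet> (W *v (Mx t x *v l)))"
      unfolding q_def \<nu>_def using matrix_inv_cancel[OF invW] by (simp add: inner_commute)
    then show ?thesis by (simp add: Zt_def exp_add[symmetric] \<nu>_def)
  qed
  have "(\<integral>\<^sup>+x. ennreal (Zt (Suc t) l x) \<partial>M) = (\<integral>\<^sup>+x. ennreal (Zt t l x * exp (\<nu> x \<bullet> w t x - q (\<nu> x))) \<partial>M)"
    by (simp add: eq)
  also have "\<dots> \<le> (\<integral>\<^sup>+x. ennreal (Zt t l x) \<partial>M)"
  proof (rule key_random[OF fms_F[OF t] Zt_F[OF t]])
    show "0 \<le> Zt t l x" for x by (simp add: Zt_def)
    show "\<nu> \<in> borel_measurable (F t)" unfolding \<nu>_def using Mx_F[of t t] by measurable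
    show "w t \<in> borel_measurable M" using t by measurable
    show "continuous_on UNIV q" unfolding q_def by (rule cont_quad)
    show "AE x in M. nn_cond_exp M (F t) (\<lambda>x. ennreal (exp (v \<bullet> w t x))) x \<le> ennreal (exp (q v))" for v
      using subg t unfolding q_def by blast
  qed
  also have "\<dots> \<le> 1" using Suc by simp
  finally show ?case .
qed

end


lemma nn_integral_lborel_affine:
  fixes f :: "'b::euclidean_space \<Rightarrow> ennreal"
  assumes [measurable]: "f \<in> borel_measurable borel" and c: "c \<noteq> 0"
  shows "(\<integral>\<^sup>+x. f x \<partial>lborel) = ennreal (\<bar>c\<bar>^DIM('b)) * (\<integral>\<^sup>+x. f (t + c *\<^sub>R x) \<partial>lborel)"
  by (subst lborel_affine[OF c, of t])
     (simp add: nn_integral_density nn_integral_distr nn_integral_cmult)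

lemma quad_meas[measurable]: "(\<lambda>x::real^'n. exp (- a * (x \<bullet> (S0 *v x)))) \<in> borel_measurable borel"
  by measurable

lemma gauss_scale:
  fixes S0 :: "real^'n^'n"
  assumes a: "0 < a"
  shows "(\<integral>\<^sup>+x. ennreal (exp (- a * (x \<bullet> (S0 *v x)))) \<partial>lborel)
       = ennreal ((1 / sqrt a) ^ CARD('n)) * (\<integral>\<^sup>+x. ennreal (exp (- (x \<bullet> (S0 *v x)))) \<partial>lborel)"
proof -
  define c where "c = 1 / sqrt a"
  have c: "c \<noteq> 0" "0 < c" using a by (auto simp: c_def)
  have "(\<integral>\<^sup>+x. ennreal (exp (- a * (x \<bullet> (S0 *v x)))) \<partial>lborel)
     = ennreal (\<bar>c\<bar>^DIM(real^'n)) * (\<integral>\<^sup>+x. ennreal (exp (- a * ((0 + c *\<^sub>R x) \<bullet> (S0 *v (0 + c *\<^sub>R x))))) \<partial>lborel)"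
    by (rule nn_integral_lborel_affine[OF _ c(1)]) measurable
  also have "(\<lambda>x. ennreal (exp (- a * ((0 + c *\<^sub>R x) \<bullet> (S0 *v (0 + c *\<^sub>R x)))))) = (\<lambda>x. ennreal (exp (- (x \<bullet> (S0 *v x)))))"
  proof
    fix x
    have "a * (c * c) = 1" using a by (simp add: c_def)
    moreover have "(c *\<^sub>R x) \<bullet> (S0 *v (c *\<^sub>R x)) = (c * c) * (x \<bullet> (S0 *v x))"
      by (simp add: matrix_vector_mult_scaleR)
    ultimately have "a * ((c *\<^sub>R x) \<bullet> (S0 *v (c *\<^sub>R x))) = x \<bullet> (S0 *v x)"
      by (metis mult.assoc mult_1)
    then show "ennreal (exp (- a * ((0 + c *\<^sub>R x) \<bullet> (S0 *v (0 + c *\<^sub>R x))))) = ennreal (exp (- (x \<bullet> (S0 *v x))))"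
      by simp
  qed
  also have "\<bar>c\<bar>^DIM(real^'n) = (1 / sqrt a) ^ CARD('n)"
    using c by (simp add: c_def)
  finally show ?thesis .
qed

lemma pd_lower:
  fixes S0 :: "real^'n^'n"
  assumes "pd S0"
  shows "\<exists>m>0. \<forall>x. m * (x \<bullet> x) \<le> x \<bullet> (S0 *v x)"
proof -
  let ?S = "sphere (0::real^'n) 1"
  have cmp: "compact ?S" by simp
  have ne: "?S \<noteq> {}" by simp
  have ct: "continuous_on ?S (\<lambda>x. x \<bullet> (S0 *v x))"
    by (intro continuous_intros matrix_vector_mult_linear_continuous_on continuous_on_id)
  obtain x0 where x0: "x0 \<in> ?S" "\<forall>y\<in>?S. x0 \<bullet> (S0 *v x0) \<le> y \<bullet> (S0 *v y)"
    using continuous_attains_inf[OF cmp ne ct] by blast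
  have "x0 \<noteq> 0" using x0(1) by auto
  then have m: "0 < x0 \<bullet> (S0 *v x0)" using assms unfolding pd_def by blast
  have "x0 \<bullet> (S0 *v x0) * (x \<bullet> x) \<le> x \<bullet> (S0 *v x)" for x
  proof (cases "x = 0")
    case False
    define u where "u = (1 / norm x) *\<^sub>R x"
    have u: "u \<in> ?S" using False unfolding u_def by simp
    have xu: "x = norm x *\<^sub>R u" using False unfolding u_def by simp
    have e1: "(norm x *\<^sub>R u) \<bullet> (S0 *v (norm x *\<^sub>R u)) = (norm x)^2 * (u \<bullet> (S0 *v u))"
      by (simp add: matrix_vector_mult_scaleR power2_eq_square)
    have e2: "x \<bullet> (S0 *v x) = (norm x)^2 * (u \<bullet> (S0 *v u))"
      using e1 xu by metis
    have e3: "x \<bullet> x = (norm x)^2" by (simp add: power2_norm_eq_inner)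
    have "x0 \<bullet> (S0 *v x0) * (norm x)^2 \<le> (u \<bullet> (S0 *v u)) * (norm x)^2"
      using x0(2) u by (intro mult_right_mono) auto
    then show ?thesis unfolding e2 e3 by (simp only: mult.commute)
  qed simp
  with m show ?thesis by blast
qed

lemma gauss1d_finite:
  assumes m: "0 < m"
  shows "(\<integral>\<^sup>+t. ennreal (exp (- m * t\<^sup>2)) \<partial>lborel) < \<infinity>"
proof -
  define \<sigma> where "\<sigma> = 1 / sqrt (2 * m)"
  have s2: "2 * \<sigma>\<^sup>2 = 1 / m" using m by (simp add: \<sigma>_def power_divide)
  have spos: "0 < \<sigma>" using m by (simp add: \<sigma>_def)
  define C where "C = sqrt (2 * pi * \<sigma>\<^sup>2)"
  have Cpos: "0 < C" using spos by (simp add: C_def)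
  have eq: "exp (- m * t\<^sup>2) = C * normal_density 0 \<sigma> t" for t
  proof -
    have "-(t - 0)\<^sup>2 / (2 * \<sigma>\<^sup>2) = - m * t\<^sup>2" using s2 m by simp
    then have "normal_density 0 \<sigma> t = 1 / C * exp (- m * t\<^sup>2)"
      unfolding normal_density_def C_def by metis
    then show ?thesis using Cpos by simp
  qed
  have "(\<integral>\<^sup>+t. ennreal (normal_density 0 \<sigma> t) \<partial>lborel) = ennreal 1"
    by (subst nn_integral_eq_integral) (use spos in auto)
  have "(\<integral>\<^sup>+t. ennreal (exp (- m * t\<^sup>2)) \<partial>lborel) = (\<integral>\<^sup>+t. ennreal C * ennreal (normal_density 0 \<sigma> t) \<partial>lborel)"
  proof (intro nn_integral_cong)
    fix t
    have "ennreal (exp (- m * t\<^sup>2)) = ennreal (C * normal_density 0 \<sigma> t)" by (simp only: eq)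
    also have "\<dots> = ennreal C * ennreal (normal_density 0 \<sigma> t)" using Cpos by (simp add: ennreal_mult)
    finally show "ennreal (exp (- m * t\<^sup>2)) = ennreal C * ennreal (normal_density 0 \<sigma> t)" .
  qed
  also have "\<dots> = ennreal C * (\<integral>\<^sup>+t. ennreal (normal_density 0 \<sigma> t) \<partial>lborel)"
    by (rule nn_integral_cmult) measurable
  finally have "(\<integral>\<^sup>+t. ennreal (exp (- m * t\<^sup>2)) \<partial>lborel) = ennreal C"
    using \<open>(\<integral>\<^sup>+t. ennreal (normal_density 0 \<sigma> t) \<partial>lborel) = ennreal 1\<close> by simp
  then show ?thesis by simp
qed

lemma gauss_finite:
  fixes S0 :: "real^'n^'n"
  assumes "pd S0"
  shows "(\<integral>\<^sup>+x. ennreal (exp (- (x \<bullet> (S0 *v x)))) \<partial>lborel) < \<infinity>"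
proof -
  obtain m where m: "0 < m" "\<And>x. m * (x \<bullet> x) \<le> x \<bullet> (S0 *v x)" using pd_lower[OF assms] by blast
  have "(\<integral>\<^sup>+x. ennreal (exp (- (x \<bullet> (S0 *v x)))) \<partial>lborel) \<le> (\<integral>\<^sup>+x. (\<Prod>b\<in>Basis. ennreal (exp (- m * ((x::real^'n) \<bullet> b)\<^sup>2))) \<partial>lborel)"
  proof (rule nn_integral_mono)
    fix x :: "real^'n"
    have "x \<bullet> x = (\<Sum>b\<in>Basis. (x \<bullet> b)\<^sup>2)" by (subst euclidean_inner) (simp add: power2_eq_square)
    then have "exp (- (x \<bullet> (S0 *v x))) \<le> (\<Prod>b\<in>Basis. exp (- m * (x \<bullet> b)\<^sup>2))"
      using m(2)[of x] by (simp add: exp_sum[symmetric] sum_distrib_left sum_negf)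
    then show "ennreal (exp (- (x \<bullet> (S0 *v x)))) \<le> (\<Prod>b\<in>Basis. ennreal (exp (- m * (x \<bullet> b)\<^sup>2)))"
      by (simp add: prod_ennreal ennreal_leI)
  qed
  also have "\<dots> = (\<Prod>b\<in>(Basis::(real^'n) set). (\<integral>\<^sup>+t. ennreal (exp (- m * t\<^sup>2)) \<partial>lborel))"
    by (rule nn_integral_lborel_prod) auto
  also have "\<dots> < \<infinity>" using gauss1d_finite[OF m(1)] by (simp add: less_top[symmetric] ennreal_prod_eq_top power_eq_top_ennreal_iff)
  finally show ?thesis .
qed

lemma gauss_pos:
  fixes S0 :: "real^'n^'n"
  shows "0 < (\<integral>\<^sup>+x. ennreal (exp (- (x \<bullet> (S0 *v x)))) \<partial>lborel)"
proof -
  have "(\<integral>\<^sup>+x. ennreal (exp (- (x \<bullet> (S0 *v x)))) \<partial>lborel) \<noteq> 0"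
  proof
    assume "(\<integral>\<^sup>+x. ennreal (exp (- (x \<bullet> (S0 *v x)))) \<partial>lborel) = 0"
    then have "AE x in lborel. ennreal (exp (- (x \<bullet> (S0 *v x)))) = 0"
      by (subst (asm) nn_integral_0_iff_AE) measurable
    then have "AE x in (lborel::(real^'n) measure). False" by simp
    then show False by (subst (asm) AE_iff_measurable[of UNIV]) auto
  qed
  then show ?thesis by (simp add: zero_less_iff_neq_zero)
qed



lemma inner_mv_transpose: "(A *v x) \<bullet> y = x \<bullet> (transpose A *v y)" for A :: "real^'n^'m"
  by (simp add: inner_vec_def matrix_vector_mult_def transpose_def sum_distrib_left sum_distrib_right mult_ac)
     (rule sum.swap)

lemma sym_inner: "transpose A = A \<Longrightarrow> x \<bullet> (A *v y) = y \<bullet> (A *v x)" for A :: "real^'n^'n"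
  by (metis inner_commute inner_mv_transpose)

lemma sum_mv: "(\<Sum>k\<in>K. A k) *v x = (\<Sum>k\<in>K. A k *v x)" for A :: "'i \<Rightarrow> real^'n^'m"
proof (induct K rule: infinite_finite_induct)
  case (infinite A) then show ?case by simp
next
  case empty then show ?case by simp
next
  case (insert k K) then show ?case by (simp add: matrix_vector_mult_add_rdistrib)
qed

lemma transpose_sum: "transpose (\<Sum>k\<in>K. A k) = (\<Sum>k\<in>K. transpose (A k))" for A :: "'i \<Rightarrow> real^'n^'m"
proof (induct K rule: infinite_finite_induct)
  case (infinite A) then show ?case by (simp add: transpose_def vec_eq_iff)
next
  case empty then show ?case by (simp add: transpose_def vec_eq_iff)
next
  case (insert k K) then show ?case by (simp add: transpose_def vec_eq_iff)
qed

lemma gram_mv: "gram W Mx T x *v l = (\<Sum>k<T. transpose (Mx k x) *v (W *v (Mx k x *v l)))"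
  by (simp add: gram_def sum_mv matrix_vector_mul_assoc matrix_mul_assoc)

lemma gram_quad: "l \<bullet> (gram W Mx T x *v l) = (\<Sum>k<T. (Mx k x *v l) \<bullet> (W *v (Mx k x *v l)))"
  unfolding gram_mv inner_sum_right by (intro sum.cong refl) (rule inner_mv_transpose[symmetric])

lemma gram_sym: "transpose W = W \<Longrightarrow> transpose (gram W Mx T x) = gram W Mx T x"
  by (simp add: gram_def transpose_sum matrix_transpose_mul matrix_mul_assoc)

lemma gram_psd: "pd W \<Longrightarrow> 0 \<le> l \<bullet> (gram W Mx T x *v l)"
  unfolding gram_quad pd_def by (intro sum_nonneg) (metis inner_zero_left order.refl less_imp_le)



lemma quad_add: "transpose A = A \<Longrightarrow> (x + y) \<bullet> (A *v (x + y)) = x \<bullet> (A *v x) + 2 * (y \<bullet> (A *v x)) + y \<bullet> (A *v y)"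
  for A :: "real^'n^'n"
  using sym_inner[of A x y]
  by (simp add: matrix_vector_right_distrib inner_add_left inner_add_right)

lemma quad_diff: "transpose A = A \<Longrightarrow> (x - y) \<bullet> (A *v (x - y)) = x \<bullet> (A *v x) - 2 * (y \<bullet> (A *v x)) + y \<bullet> (A *v y)"
  for A :: "real^'n^'n"
  using sym_inner[of A x y]
  by (simp add: vec.diff inner_diff_left inner_diff_right)

lemma quad_scale: "(c *\<^sub>R x) \<bullet> (A *v (c *\<^sub>R x)) = c\<^sup>2 * (x \<bullet> (A *v x))" for A :: "real^'n^'n"
  by (simp add: matrix_vector_mult_scaleR power2_eq_square)

lemma mixture_lower:
  fixes V S0 :: "real^'n^'n" and S d :: "real^'n"
  assumes symV: "transpose V = V" and symS: "transpose S0 = S0" and Vd: "V *v d = S"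
    and cw: "0 < cw" and e: "0 < \<epsilon>" "\<epsilon> < 1"
    and hU: "\<And>u. u \<bullet> (V *v u) \<le> (1+\<epsilon>) * (u \<bullet> (S0 *v u))"
    and hL: "\<And>u. (1-\<epsilon>) * (u \<bullet> (S0 *v u)) \<le> u \<bullet> (V *v u)"
  shows "ennreal (exp (d \<bullet> (V *v d) / (4*cw\<^sup>2))) * (\<integral>\<^sup>+u. ennreal (exp (- cw\<^sup>2 * (u \<bullet> (S0 *v u)))) \<partial>lborel)
     \<le> (\<integral>\<^sup>+l. ennreal (exp (- (1/2*cw\<^sup>2*(1-\<epsilon>)) * (l \<bullet> (S0 *v l))) * exp (l \<bullet> S - 1/2*cw\<^sup>2*(l \<bullet> (V *v l)))) \<partial>lborel)"
proof -
  define a where "a = 1/2*cw\<^sup>2*(1-\<epsilon>)"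
  define g where "g l = - a * (l \<bullet> (S0 *v l)) + l \<bullet> S - 1/2*cw\<^sup>2*(l \<bullet> (V *v l))" for l
  define \<mu> where "\<mu> = (1/(2*cw\<^sup>2)) *\<^sub>R d"
  define P where "P u = a * (u \<bullet> (S0 *v u)) + 1/2*cw\<^sup>2*(u \<bullet> (V *v u))" for u
  define L where "L = S - (2*a) *\<^sub>R (S0 *v \<mu>) - cw\<^sup>2 *\<^sub>R (V *v \<mu>)"
  define K2 where "K2 = (\<integral>\<^sup>+u. ennreal (exp (- cw\<^sup>2 * (u \<bullet> (S0 *v u)))) \<partial>lborel)"
  have gm[measurable]: "g \<in> borel_measurable borel" unfolding g_def by measurable
  have ieq: "exp (- (1/2*cw\<^sup>2*(1-\<epsilon>)) * (l \<bullet> (S0 *v l))) * exp (l \<bullet> S - 1/2*cw\<^sup>2*(l \<bullet> (V *v l))) = exp (g l)" for l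
    by (simp add: g_def a_def exp_add[symmetric])
  have s1: "\<mu> \<bullet> (S0 *v u) = u \<bullet> (S0 *v \<mu>)" "\<mu> \<bullet> (V *v u) = u \<bullet> (V *v \<mu>)" for u
    using sym_inner[OF symS] sym_inner[OF symV] by auto
  have gp: "g (\<mu> + u) = g \<mu> + u \<bullet> L - P u" for u
    unfolding g_def P_def L_def
    by (simp add: s1[of u] quad_add[OF symV] quad_add[OF symS] inner_add_left inner_diff_right algebra_simps)
  have gn: "g (\<mu> - u) = g \<mu> - u \<bullet> L - P u" for u
    unfolding g_def P_def L_def
    by (simp add: s1[of u] quad_diff[OF symV] quad_diff[OF symS] inner_diff_left inner_diff_right algebra_simps)
  have Pb: "P u \<le> cw\<^sup>2 * (u \<bullet> (S0 *v u))" for u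
  proof -
    have "1/2*cw\<^sup>2*(u \<bullet> (V *v u)) \<le> 1/2*cw\<^sup>2*((1+\<epsilon>) * (u \<bullet> (S0 *v u)))"
      using hU[of u] by (intro mult_left_mono) auto
    moreover have "1/2*cw\<^sup>2*(1-\<epsilon>)*(u \<bullet> (S0 *v u)) + 1/2*cw\<^sup>2*((1+\<epsilon>) * (u \<bullet> (S0 *v u))) = cw\<^sup>2 * (u \<bullet> (S0 *v u))"
      by (simp add: field_simps)
    ultimately show ?thesis unfolding P_def a_def by linarith
  qed
  have pt: "2 * (exp (g \<mu>) * exp (- cw\<^sup>2 * (u \<bullet> (S0 *v u)))) \<le> exp (g (\<mu> + u)) + exp (g (\<mu> - u))" for u
  proof -
    have e1: "exp (u \<bullet> L) + exp (- (u \<bullet> L)) \<ge> 2"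
      using exp_ge_add_one_self[of "u \<bullet> L"] exp_ge_add_one_self[of "- (u \<bullet> L)"] by linarith
    have e2: "exp (g \<mu>) * exp (- cw\<^sup>2 * (u \<bullet> (S0 *v u))) \<le> exp (g \<mu> - P u)"
      using Pb[of u] by (simp add: exp_add[symmetric])
    have "exp (g (\<mu> + u)) + exp (g (\<mu> - u)) = exp (g \<mu> - P u) * (exp (u \<bullet> L) + exp (- (u \<bullet> L)))"
      by (simp add: gp gn exp_add[symmetric] exp_diff distrib_left field_simps)
    also have "\<dots> \<ge> exp (g \<mu> - P u) * 2" using e1 by (intro mult_left_mono) auto
    finally show ?thesis using e2 by linarith
  qed
  define I where "I = (\<integral>\<^sup>+l. ennreal (exp (g l)) \<partial>lborel)"
  have I1: "I = (\<integral>\<^sup>+u. ennreal (exp (g (\<mu> + u))) \<partial>lborel)"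
    unfolding I_def by (subst nn_integral_lborel_affine[of _ 1 \<mu>]) auto
  have I2: "I = (\<integral>\<^sup>+u. ennreal (exp (g (\<mu> - u))) \<partial>lborel)"
    unfolding I_def by (subst nn_integral_lborel_affine[of _ "-1" \<mu>]) auto
  have "ennreal 2 * (ennreal (exp (g \<mu>)) * K2) = (\<integral>\<^sup>+u. ennreal (2 * (exp (g \<mu>) * exp (- cw\<^sup>2 * (u \<bullet> (S0 *v u))))) \<partial>lborel)"
    unfolding K2_def
    by (subst nn_integral_cmult[symmetric], measurable)+
       (simp add: ennreal_mult[symmetric] mult.assoc, intro nn_integral_cong, simp add: ennreal_mult)
  also have "\<dots> \<le> (\<integral>\<^sup>+u. ennreal (exp (g (\<mu> + u))) + ennreal (exp (g (\<mu> - u))) \<partial>lborel)"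
  proof (intro nn_integral_mono)
    fix u
    show "ennreal (2 * (exp (g \<mu>) * exp (- cw\<^sup>2 * (u \<bullet> (S0 *v u))))) \<le> ennreal (exp (g (\<mu> + u))) + ennreal (exp (g (\<mu> - u)))"
      using ennreal_leI[OF pt[of u]] by simp
  qed
  also have "\<dots> = (\<integral>\<^sup>+u. ennreal (exp (g (\<mu> + u))) \<partial>lborel) + (\<integral>\<^sup>+u. ennreal (exp (g (\<mu> - u))) \<partial>lborel)"
    by (rule nn_integral_add) measurable
  also have "\<dots> = I + I" using I1 I2 by simp
  also have "\<dots> = ennreal 2 * I" by (simp add: mult_2)
  finally have "ennreal 2 * (ennreal (exp (g \<mu>)) * K2) \<le> ennreal 2 * I" .
  then have gI: "ennreal (exp (g \<mu>)) * K2 \<le> I"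
    by (simp add: ennreal_mult_le_mult_iff)
  have "d \<bullet> (V *v d) / (4*cw\<^sup>2) \<le> g \<mu>"
  proof -
    define q where "q = d \<bullet> (V *v d)"
    define s where "s = d \<bullet> (S0 *v d)"
    have qs: "(1-\<epsilon>) * s \<le> q" using hL[of d] by (simp add: q_def s_def)
    define c where "c = 1/(2*cw\<^sup>2)"
    have m1: "\<mu> \<bullet> (S0 *v \<mu>) = c\<^sup>2 * s" "\<mu> \<bullet> (V *v \<mu>) = c\<^sup>2 * q" "\<mu> \<bullet> S = c * q"
      unfolding \<mu>_def c_def[symmetric] s_def q_def Vd[symmetric] by (simp_all add: matrix_vector_mult_scaleR power2_eq_square)
    have "g \<mu> = - a * (c\<^sup>2 * s) + c * q - 1/2*cw\<^sup>2*(c\<^sup>2 * q)"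
      unfolding g_def m1 by simp
    also have "\<dots> = (- (1-\<epsilon>) * s + 3 * q) / (8 * cw\<^sup>2)"
      unfolding a_def c_def using cw by (simp add: power2_eq_square field_simps)
    also have "\<dots> \<ge> (2 * q) / (8 * cw\<^sup>2)" using qs cw by (intro divide_right_mono) (auto simp: algebra_simps)
    finally show ?thesis by (simp add: q_def)
  qed
  then have "ennreal (exp (d \<bullet> (V *v d) / (4*cw\<^sup>2))) * K2 \<le> ennreal (exp (g \<mu>)) * K2"
    by (intro mult_right_mono ennreal_leI) auto
  also note gI
  finally show ?thesis unfolding I_def K2_def ieq .
qed



lemma quad_sup:
  fixes V :: "real^'n^'n"
  assumes symV: "transpose V = V" and psdV: "\<And>u. 0 \<le> u \<bullet> (V *v u)" and Vd: "V *v d = S"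
  shows "d \<bullet> (V *v d) \<le> z \<longleftrightarrow> (\<forall>l. 2 * (l \<bullet> S) - l \<bullet> (V *v l) \<le> z)"
proof
  assume h: "d \<bullet> (V *v d) \<le> z"
  show "\<forall>l. 2 * (l \<bullet> S) - l \<bullet> (V *v l) \<le> z"
  proof
    fix l
    have "(l - d) \<bullet> (V *v (l - d)) = l \<bullet> (V *v l) - 2 * (d \<bullet> (V *v l)) + d \<bullet> (V *v d)"
      by (rule quad_diff[OF symV])
    moreover have "d \<bullet> (V *v l) = l \<bullet> S" using sym_inner[OF symV, of d l] Vd by simp
    moreover have "0 \<le> (l - d) \<bullet> (V *v (l - d))" by (rule psdV)
    ultimately show "2 * (l \<bullet> S) - l \<bullet> (V *v l) \<le> z" using h by linarith
  qed
next
  assume "\<forall>l. 2 * (l \<bullet> S) - l \<bullet> (V *v l) \<le> z"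
  then have "2 * (d \<bullet> S) - d \<bullet> (V *v d) \<le> z" by blast
  then show "d \<bullet> (V *v d) \<le> z" using Vd by simp
qed

lemma dense_forall:
  fixes f :: "'b::topological_space \<Rightarrow> real"
  assumes f: "continuous_on UNIV f"
    and D: "\<forall>X. open X \<longrightarrow> X \<noteq> {} \<longrightarrow> (\<exists>d\<in>D. d \<in> X)"
  shows "(\<forall>l\<in>D. f l \<le> z) \<longleftrightarrow> (\<forall>l. f l \<le> z)"
proof (intro iffI allI)
  fix l assume h: "\<forall>l\<in>D. f l \<le> z"
  show "f l \<le> z"
  proof (rule ccontr)
    assume "\<not> f l \<le> z"
    then have "l \<in> {x. z < f x}" by simp
    then have ne: "{x. z < f x} \<noteq> {}" by blast
    have "open {x. (\<lambda>_. z) x < f x}" by (rule open_Collect_less) (auto intro: continuous_intros f)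
    with D ne obtain d where "d \<in> D" "z < f d" by auto
    with h show False by auto
  qed
qed auto

lemma meas_det[measurable (raw)]:
  fixes f :: "'a \<Rightarrow> real^'n^'n"
  assumes [measurable]: "f \<in> borel_measurable M"
  shows "(\<lambda>x. det (f x)) \<in> borel_measurable M"
  unfolding det_def by measurable

lemma const_identity:
  fixes n :: nat and cw \<epsilon> \<delta> :: real
  assumes cw: "0 < cw" and e: "0 < \<epsilon>" "\<epsilon> < 1" and d: "0 < \<delta>"
  shows "\<delta> / (1 / sqrt (1/2*cw\<^sup>2*(1-\<epsilon>))) ^ n * exp ((2 * real n * ln (2 / (1 - \<epsilon>)) + 4 * ln (1 / \<delta>)) / 4) * (1 / sqrt (cw\<^sup>2)) ^ n = 1"
proof -
  define r where "r = 2 / (1 - \<epsilon>)"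
  have r: "0 < r" using e by (simp add: r_def)
  have e1: "exp ((2 * real n * ln r + 4 * ln (1 / \<delta>)) / 4) = exp (ln r / 2) ^ n * (1 / \<delta>)"
  proof -
    have "(2 * real n * ln r + 4 * ln (1 / \<delta>)) / 4 = real n * (ln r / 2) + ln (1 / \<delta>)" by simp
    then show ?thesis using d by (simp only: exp_add exp_of_nat_mult exp_ln) simp
  qed
  have e2: "exp (ln r / 2) = sqrt r"
    using r by (simp add: powr_half_sqrt[symmetric] powr_def)
  have e3: "sqrt (1/2*cw\<^sup>2*(1-\<epsilon>)) = cw / sqrt r"
  proof -
    have "1/2*cw\<^sup>2*(1-\<epsilon>) = cw\<^sup>2 / r" using e by (simp add: r_def field_simps)
    then show ?thesis using cw by (simp add: real_sqrt_divide)
  qed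
  have "\<delta> / (1 / sqrt (1/2*cw\<^sup>2*(1-\<epsilon>))) ^ n * exp ((2 * real n * ln r + 4 * ln (1 / \<delta>)) / 4) * (1 / sqrt (cw\<^sup>2)) ^ n
       = \<delta> * (cw / sqrt r) ^ n * (sqrt r ^ n * (1 / \<delta>)) * (1 / cw) ^ n"
    unfolding e1 e2 e3 using cw by (simp add: power_divide)
  also have "\<dots> = ((cw / sqrt r) ^ n * sqrt r ^ n * (1 / cw) ^ n) * (\<delta> * (1 / \<delta>))"
    by (simp only: mult_ac)
  also have "(cw / sqrt r) ^ n * sqrt r ^ n * (1 / cw) ^ n = 1"
  proof -
    have p: "cw / sqrt r * sqrt r * (1 / cw) = 1" using cw r by simp
    show ?thesis using p by (metis power_mult_distrib power_one)
  qed
  also have "\<delta> * (1 / \<delta>) = 1" using d by simp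
  finally show ?thesis using cw d unfolding r_def by simp
qed



context ols_setup
begin

lemma symW: "transpose W = W" using pdW by (simp add: pd_def)

definition "Sv x = (\<Sum>k<T. transpose (Mx k x) *v (W *v w k x))"

lemma Zform: "Zt T l x = exp (l \<bullet> Sv x - 1/2*cw\<^sup>2*(l \<bullet> (gram W Mx T x *v l)))"
proof -
  have a: "(W *v (Mx k x *v l)) \<bullet> w k x = l \<bullet> (transpose (Mx k x) *v (W *v w k x))" for k
    by (metis inner_mv_transpose symW)
  show ?thesis
    unfolding Zt_def Sv_def gram_quad inner_sum_right
    by (simp add: a sum_subtractf sum_distrib_left)
qed

lemma Sv_M: "Sv \<in> borel_measurable M"
proof -
  have [measurable]: "k \<in> {..<T} \<Longrightarrow> Mx k \<in> borel_measurable M" for k by simp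
  have [measurable]: "k \<in> {..<T} \<Longrightarrow> w k \<in> borel_measurable M" for k by simp
  show ?thesis unfolding Sv_def by measurable
qed

lemma ols_form:
  assumes x: "x \<in> space M" and inv: "invertible (gram W Mx T x)"
  shows "\<theta> - ols W Mx y T x = - (matrix_inv (gram W Mx T x) *v Sv x)"
proof -
  let ?V = "gram W Mx T x"
  have "(\<Sum>k<T. transpose (Mx k x) *v (W *v y (Suc k) x))
      = (\<Sum>k<T. transpose (Mx k x) *v (W *v (Mx k x *v \<theta>)) + transpose (Mx k x) *v (W *v w k x))"
    using y_eq x by (intro sum.cong refl) (simp add: matrix_vector_right_distrib)
  also have "\<dots> = ?V *v \<theta> + Sv x" by (simp add: sum.distrib gram_mv Sv_def)
  finally have "ols W Mx y T x = matrix_inv ?V *v (?V *v \<theta> + Sv x)" by (simp add: ols_def)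
  also have "\<dots> = \<theta> + matrix_inv ?V *v Sv x"
    by (simp add: matrix_vector_right_distrib matrix_inv_cancel[OF inv])
  finally show ?thesis by simp
qed

lemma A_norm_neg: "A_norm A (- v) = sqrt (v \<bullet> (A *v v))"
  by (simp add: A_norm_def vec.neg)

end



context ols_setup
begin

lemma main:
  fixes \<epsilon> \<delta>' \<delta> :: real
  assumes intV: "integrable M (gram W Mx T)"
    and pdS: "pd (integral\<^sup>L M (gram W Mx T))"
    and e: "0 < \<epsilon>" "\<epsilon> < 1"
    and PG: "measure M {x \<in> space M.
           loewner_le ((1 - \<epsilon>) *\<^sub>R integral\<^sup>L M (gram W Mx T)) (gram W Mx T x) \<and>
           loewner_le (gram W Mx T x) ((1 + \<epsilon>) *\<^sub>R integral\<^sup>L M (gram W Mx T))} \<ge> 1 - \<delta>'"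
    and \<delta>'1: "\<delta>' < 1"
    and d: "0 < \<delta>" "\<delta> < 1"
  shows "measure M {x \<in> space M. invertible (gram W Mx T x) \<and>
           A_norm (gram W Mx T x) (\<theta> - ols W Mx y T x)
             \<le> cw * sqrt (2 * real CARD('n) * ln (2 / (1 - \<epsilon>)) + 4 * ln (1 / \<delta>))}
         \<ge> 1 - (\<delta> + \<delta>')"
proof -
  interpret prob_space M by (rule prob)
  define S0 where "S0 = integral\<^sup>L M (gram W Mx T)"
  define V where "V = gram W Mx T"
  define R where "R = 2 * real CARD('n) * ln (2 / (1 - \<epsilon>)) + 4 * ln (1 / \<delta>)"
  define G where "G = {x \<in> space M. loewner_le ((1 - \<epsilon>) *\<^sub>R S0) (V x) \<and> loewner_le (V x) ((1 + \<epsilon>) *\<^sub>R S0)}"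
  define C where "C = {x \<in> space M. invertible (V x) \<and> A_norm (V x) (\<theta> - ols W Mx y T x) \<le> cw * sqrt R}"
  define a where "a = 1/2*cw\<^sup>2*(1-\<epsilon>)"
  have apos: "0 < a" using cw_pos e by (simp add: a_def)
  have R0: "0 \<le> R" using e d by (simp add: R_def)
  have VM[measurable]: "V \<in> borel_measurable M" unfolding V_def using intV by (rule borel_measurable_integrable)
  have SM[measurable]: "Sv \<in> borel_measurable M" by (rule Sv_M)
  have symS: "transpose S0 = S0" using pdS by (simp add: pd_def S0_def)
  have symV: "transpose (V x) = V x" for x unfolding V_def by (rule gram_sym[OF symW])
  have psdV: "0 \<le> u \<bullet> (V x *v u)" for x u unfolding V_def by (rule gram_psd[OF pdW])
  have PG': "1 - \<delta>' \<le> measure M G" using PG by (simp add: G_def S0_def V_def)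
  have GM: "G \<in> sets M"
  proof (rule ccontr)
    assume "G \<notin> sets M"
    then have "measure M G = 0" by (rule measure_notin_sets)
    with PG' \<delta>'1 show False by simp
  qed
  define \<Phi> where "\<Phi> p = ennreal (exp (- a * (snd p \<bullet> (S0 *v snd p))) * Zt T (snd p) (fst p))" for p
  have \<Phi>M: "\<Phi> \<in> borel_measurable (M \<Otimes>\<^sub>M lborel)"
  proof -
    have [measurable]: "k \<in> {..<T} \<Longrightarrow> Mx k \<in> borel_measurable M" for k by simp
    have [measurable]: "k \<in> {..<T} \<Longrightarrow> w k \<in> borel_measurable M" for k by simp
    show ?thesis unfolding \<Phi>_def Zt_def by measurable
  qed
  define H where "H x = (\<integral>\<^sup>+l. \<Phi> (x, l) \<partial>lborel)" for x
  have HM[measurable]: "H \<in> borel_measurable M"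
    unfolding H_def by (rule lborel.borel_measurable_nn_integral_fst[OF \<Phi>M])
  define K where "K = (\<integral>\<^sup>+l. ennreal (exp (- a * (l \<bullet> (S0 *v l)))) \<partial>lborel)"
  have HI: "(\<integral>\<^sup>+x. H x \<partial>M) \<le> K"
  proof -
    interpret pair_sigma_finite M lborel
      unfolding pair_sigma_finite_def using prob_space_imp_sigma_finite[OF prob] sigma_finite_lborel by auto
    have "(\<integral>\<^sup>+x. H x \<partial>M) = (\<integral>\<^sup>+l. (\<integral>\<^sup>+x. \<Phi> (x, l) \<partial>M) \<partial>lborel)"
      unfolding H_def by (rule Fubini[OF \<Phi>M, symmetric])
    also have "\<dots> \<le> K"
      unfolding K_def
    proof (rule nn_integral_mono)
      fix l :: "real^'n"
      have "(\<integral>\<^sup>+x. \<Phi> (x, l) \<partial>M) = (\<integral>\<^sup>+x. ennreal (exp (- a * (l \<bullet> (S0 *v l)))) * ennreal (Zt T l x) \<partial>M)"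
        unfolding \<Phi>_def by (intro nn_integral_cong) (simp add: ennreal_mult Zt_def)
      also have "\<dots> = ennreal (exp (- a * (l \<bullet> (S0 *v l)))) * (\<integral>\<^sup>+x. ennreal (Zt T l x) \<partial>M)"
      proof (rule nn_integral_cmult)
        have [measurable]: "k \<in> {..<T} \<Longrightarrow> Mx k \<in> borel_measurable M" for k by simp
        have [measurable]: "k \<in> {..<T} \<Longrightarrow> w k \<in> borel_measurable M" for k by simp
        show "(\<lambda>x. ennreal (Zt T l x)) \<in> borel_measurable M" unfolding Zt_def by measurable
      qed
      also have "\<dots> \<le> ennreal (exp (- a * (l \<bullet> (S0 *v l)))) * 1"
        using Z_bound[of T l] by (intro mult_left_mono) auto
      finally show "(\<integral>\<^sup>+x. \<Phi> (x, l) \<partial>M) \<le> ennreal (exp (- a * (l \<bullet> (S0 *v l))))" by simp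
    qed
    finally show ?thesis .
  qed
  define J where "J = (\<integral>\<^sup>+l. ennreal (exp (- (l \<bullet> (S0 *v l)))) \<partial>lborel)"
  have Jfin: "J < \<infinity>" unfolding J_def using gauss_finite[OF pdS[folded S0_def]] .
  have Jpos: "0 < J" unfolding J_def by (rule gauss_pos)
  define Jr where "Jr = enn2real J"
  have JJr: "J = ennreal Jr" using Jfin by (simp add: Jr_def)
  have Jr: "0 < Jr" using Jfin Jpos by (simp add: Jr_def enn2real_positive_iff)
  define ca where "ca = (1 / sqrt a) ^ CARD('n)"
  define cb where "cb = (1 / sqrt (cw\<^sup>2)) ^ CARD('n)"
  have ca: "0 < ca" using apos by (simp add: ca_def)
  have cb: "0 < cb" using cw_pos by (simp add: cb_def)
  have KK: "K = ennreal (ca * Jr)"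
    unfolding K_def gauss_scale[OF apos] J_def[symmetric] JJr ca_def using ca_def ca Jr
    by (simp add: ennreal_mult)
  have K2a: "(\<integral>\<^sup>+u. ennreal (exp (- cw\<^sup>2 * (u \<bullet> (S0 *v u)))) \<partial>lborel) = ennreal cb * J"
    unfolding cb_def J_def by (rule gauss_scale) (use cw_pos in simp)
  have K2: "(\<integral>\<^sup>+u. ennreal (exp (- cw\<^sup>2 * (u \<bullet> (S0 *v u)))) \<partial>lborel) = ennreal (cb * Jr)"
    unfolding K2a JJr using cb Jr by (simp add: ennreal_mult)
  define c0 where "c0 = \<delta> / (ca * Jr)"
  have c0: "0 < c0" using d ca Jr by (simp add: c0_def)
  define Bad where "Bad = {x \<in> space M. 1 \<le> ennreal c0 * H x}"
  have BadM: "Bad \<in> sets M" unfolding Bad_def by measurable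
  have "emeasure M Bad \<le> ennreal c0 * set_nn_integral M (space M) H"
    unfolding Bad_def by (rule nn_integral_Markov_inequality) auto
  also have "set_nn_integral M (space M) H = (\<integral>\<^sup>+x. H x \<partial>M)"
    by (intro nn_integral_cong) simp
  also have "ennreal c0 * (\<integral>\<^sup>+x. H x \<partial>M) \<le> ennreal c0 * K"
    using HI by (intro mult_left_mono) auto
  also have "ennreal c0 * K = ennreal \<delta>"
    using c0 ca Jr unfolding KK by (simp add: ennreal_mult[symmetric] c0_def)
  finally have "emeasure M Bad \<le> ennreal \<delta>" .
  then have PBad: "measure M Bad \<le> \<delta>"
    using d by (simp add: emeasure_eq_measure)
  have sub: "G - Bad \<subseteq> C"
  proof
    fix x assume xGB: "x \<in> G - Bad"
    then have x: "x \<in> space M" by (simp add: G_def)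
    have lo: "(1-\<epsilon>) * (u \<bullet> (S0 *v u)) \<le> u \<bullet> (V x *v u)" for u
    proof -
      have "0 \<le> u \<bullet> ((V x - (1 - \<epsilon>) *\<^sub>R S0) *v u)"
        using xGB by (simp add: G_def loewner_le_def psd_def)
      then show ?thesis
        by (simp add: matrix_vector_mult_diff_rdistrib scaleR_matrix_vector_assoc[symmetric] inner_diff_right)
    qed
    have hi: "u \<bullet> (V x *v u) \<le> (1+\<epsilon>) * (u \<bullet> (S0 *v u))" for u
    proof -
      have "0 \<le> u \<bullet> (((1 + \<epsilon>) *\<^sub>R S0 - V x) *v u)"
        using xGB by (simp add: G_def loewner_le_def psd_def)
      then show ?thesis
        by (simp add: matrix_vector_mult_diff_rdistrib scaleR_matrix_vector_assoc[symmetric] inner_diff_right)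
    qed
    have "pd (V x)" unfolding pd_def
    proof (intro conjI allI impI)
      show "transpose (V x) = V x" by (rule symV)
      fix u :: "real^'n" assume "u \<noteq> 0"
      then have "0 < u \<bullet> (S0 *v u)" using pdS by (simp add: pd_def S0_def)
      then have "0 < (1-\<epsilon>) * (u \<bullet> (S0 *v u))" using e by simp
      then show "0 < u \<bullet> (V x *v u)" using lo[of u] by linarith
    qed
    then have inv: "invertible (V x)" by (rule pd_invertible)
    define dd where "dd = matrix_inv (V x) *v Sv x"
    have Vdd: "V x *v dd = Sv x" unfolding dd_def by (rule matrix_inv_cancel2[OF inv])
    have Hx: "H x = (\<integral>\<^sup>+l. ennreal (exp (- (1/2*cw\<^sup>2*(1-\<epsilon>)) * (l \<bullet> (S0 *v l))) * exp (l \<bullet> Sv x - 1/2*cw\<^sup>2*(l \<bullet> (V x *v l)))) \<partial>lborel)"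
      unfolding H_def \<Phi>_def by (simp add: Zform a_def V_def)
    have ml: "ennreal (exp (dd \<bullet> (V x *v dd) / (4*cw\<^sup>2))) * ennreal (cb * Jr) \<le> H x"
      unfolding Hx K2[symmetric]
      by (rule mixture_lower[OF symV symS Vdd cw_pos e hi lo])
    have q: "dd \<bullet> (V x *v dd) \<le> cw\<^sup>2 * R"
    proof (rule ccontr)
      assume "\<not> dd \<bullet> (V x *v dd) \<le> cw\<^sup>2 * R"
      then have "R / 4 \<le> dd \<bullet> (V x *v dd) / (4*cw\<^sup>2)" using cw_pos by (simp add: field_simps)
      then have "exp (R/4) \<le> exp (dd \<bullet> (V x *v dd) / (4*cw\<^sup>2))" by simp
      then have "ennreal (exp (R/4)) * ennreal (cb * Jr) \<le> ennreal (exp (dd \<bullet> (V x *v dd) / (4*cw\<^sup>2))) * ennreal (cb * Jr)"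
        by (intro mult_right_mono ennreal_leI) auto
      then have "ennreal (exp (R/4)) * ennreal (cb * Jr) \<le> H x"
        using ml by (rule order_trans)
      then have "ennreal c0 * (ennreal (exp (R/4)) * ennreal (cb * Jr)) \<le> ennreal c0 * H x"
        by (intro mult_left_mono) auto
      moreover have "ennreal c0 * (ennreal (exp (R/4)) * ennreal (cb * Jr)) = 1"
      proof -
        have "c0 * (exp (R/4) * (cb * Jr)) = \<delta> / ca * exp (R/4) * cb"
          using Jr by (simp add: c0_def field_simps)
        also have "\<dots> = 1" unfolding ca_def cb_def R_def a_def
          by (rule const_identity[OF cw_pos e d(1)])
        finally show ?thesis using c0 cb Jr by (simp add: ennreal_mult[symmetric])
      qed
      ultimately have "x \<in> Bad" using x by (simp add: Bad_def)
      with xGB show False by simp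
    qed
    have "A_norm (V x) (\<theta> - ols W Mx y T x) = sqrt (dd \<bullet> (V x *v dd))"
      using ols_form[OF x inv[unfolded V_def]] by (simp add: A_norm_neg dd_def V_def)
    also have "\<dots> \<le> sqrt (cw\<^sup>2 * R)" using q by simp
    also have "\<dots> = cw * sqrt R" using cw_pos by (simp add: real_sqrt_mult)
    finally show "x \<in> C" using x inv by (simp add: C_def)
  qed
  obtain D :: "(real^'n) set" where D: "countable D" "\<forall>X. open X \<longrightarrow> X \<noteq> {} \<longrightarrow> (\<exists>d\<in>D. d \<in> X)"
    using countable_dense_exists by blast
  have Dne: "D \<noteq> {}" using D(2)[rule_format, of UNIV] by auto
  define r where "r = cw * sqrt R"
  have r0: "0 \<le> r" using cw_pos R0 by (simp add: r_def)
  have Ceq: "C = {x \<in> space M. det (V x) \<noteq> 0} \<inter> (space M \<inter> (\<Inter>l\<in>D. {x \<in> space M. 2 * (l \<bullet> Sv x) - l \<bullet> (V x *v l) \<le> r\<^sup>2}))"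
  proof (intro set_eqI iffI)
    fix x assume "x \<in> C"
    then have x: "x \<in> space M" and inv: "invertible (V x)" and an: "A_norm (V x) (\<theta> - ols W Mx y T x) \<le> r"
      by (auto simp: C_def r_def)
    define dd where "dd = matrix_inv (V x) *v Sv x"
    have Vdd: "V x *v dd = Sv x" unfolding dd_def by (rule matrix_inv_cancel2[OF inv])
    have "sqrt (dd \<bullet> (V x *v dd)) \<le> r"
      using an ols_form[OF x inv[unfolded V_def]] by (simp add: A_norm_neg dd_def V_def)
    then have "(sqrt (dd \<bullet> (V x *v dd)))\<^sup>2 \<le> r\<^sup>2" using psdV[of dd x] by (intro power_mono) auto
    then have "dd \<bullet> (V x *v dd) \<le> r\<^sup>2" using psdV[of dd x] by simp
    then have "\<forall>l. 2 * (l \<bullet> Sv x) - l \<bullet> (V x *v l) \<le> r\<^sup>2" using quad_sup[OF symV psdV Vdd] by blast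
    then show "x \<in> {x \<in> space M. det (V x) \<noteq> 0} \<inter> (space M \<inter> (\<Inter>l\<in>D. {x \<in> space M. 2 * (l \<bullet> Sv x) - l \<bullet> (V x *v l) \<le> r\<^sup>2}))"
      using x inv by (simp add: invertible_det_nz)
  next
    fix x assume "x \<in> {x \<in> space M. det (V x) \<noteq> 0} \<inter> (space M \<inter> (\<Inter>l\<in>D. {x \<in> space M. 2 * (l \<bullet> Sv x) - l \<bullet> (V x *v l) \<le> r\<^sup>2}))"
    then have x: "x \<in> space M" and inv: "invertible (V x)" and hD: "\<forall>l\<in>D. 2 * (l \<bullet> Sv x) - l \<bullet> (V x *v l) \<le> r\<^sup>2"
      by (auto simp: invertible_det_nz)
    have ct: "continuous_on UNIV (\<lambda>l. 2 * (l \<bullet> Sv x) - l \<bullet> (V x *v l))"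
      by (intro continuous_intros matrix_vector_mult_linear_continuous_on continuous_on_id)
    have hall: "\<forall>l. 2 * (l \<bullet> Sv x) - l \<bullet> (V x *v l) \<le> r\<^sup>2" using dense_forall[OF ct D(2)] hD by blast
    define dd where "dd = matrix_inv (V x) *v Sv x"
    have Vdd: "V x *v dd = Sv x" unfolding dd_def by (rule matrix_inv_cancel2[OF inv])
    have "dd \<bullet> (V x *v dd) \<le> r\<^sup>2" using quad_sup[OF symV psdV Vdd] hall by blast
    then have "sqrt (dd \<bullet> (V x *v dd)) \<le> sqrt (r\<^sup>2)" by (rule real_sqrt_le_mono)
    then have "sqrt (dd \<bullet> (V x *v dd)) \<le> r" using r0 by simp
    then have "A_norm (V x) (\<theta> - ols W Mx y T x) \<le> r"
      using ols_form[OF x inv[unfolded V_def]] by (simp add: A_norm_neg dd_def V_def)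
    then show "x \<in> C" using x inv by (simp add: C_def r_def)
  qed
  have CM: "C \<in> sets M"
    unfolding Ceq
  proof (intro sets.Int sets.countable_INT' D(1) Dne)
    show "{x \<in> space M. det (V x) \<noteq> 0} \<in> sets M" by measurable
    show "space M \<in> sets M" by simp
    show "(\<lambda>l. {x \<in> space M. 2 * (l \<bullet> Sv x) - l \<bullet> (V x *v l) \<le> r\<^sup>2}) ` D \<subseteq> sets M" by auto
  qed
  have "measure M G \<le> measure M (G - Bad) + measure M Bad"
  proof -
    have "measure M G \<le> measure M ((G - Bad) \<union> Bad)"
      using GM BadM by (intro finite_measure_mono) auto
    also have "\<dots> \<le> measure M (G - Bad) + measure M Bad"
      using GM BadM by (intro measure_subadditive) (auto simp: emeasure_eq_measure)
    finally show ?thesis .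
  qed
  moreover have "measure M (G - Bad) \<le> measure M C"
    using sub CM by (intro finite_measure_mono)
  ultimately have "1 - (\<delta> + \<delta>') \<le> measure M C" using PG' PBad by linarith
  then show ?thesis by (simp add: C_def V_def R_def)
qed

end


theorem corollary1:
  fixes M :: "'a measure" and T :: nat
    and Mx :: "nat \<Rightarrow> 'a \<Rightarrow> real^'n^'m"
    and y w :: "nat \<Rightarrow> 'a \<Rightarrow> real^'m"
    and \<theta> :: "real^'n" and W :: "real^'m^'m"
    and cw \<epsilon> \<delta>' \<delta> :: real
  assumes "prob_space M"
    and "\<forall>k<T. Mx k \<in> borel_measurable M"
    and "\<forall>k<T. w k \<in> borel_measurable M"
    and "\<forall>t<T. \<forall>x\<in>space M. y (Suc t) x = Mx t x *v \<theta> + w t x"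
    and "pd W" and "0 < cw"
    and "\<forall>t<T. \<forall>\<nu>. AE x in M.
           nn_cond_exp M (data_sigma M Mx y t) (\<lambda>x. ennreal (exp (\<nu> \<bullet> w t x))) x
             \<le> ennreal (exp (1/2 * cw\<^sup>2 * (\<nu> \<bullet> (matrix_inv W *v \<nu>))))"
    and "integrable M (gram W Mx T)"
    and "pd (integral\<^sup>L M (gram W Mx T))"
    and "0 < \<epsilon>" and "\<epsilon> < 1" and "0 < \<delta>'" and "\<delta>' < 1"
    and "measure M {x \<in> space M.
           loewner_le ((1 - \<epsilon>) *\<^sub>R integral\<^sup>L M (gram W Mx T)) (gram W Mx T x) \<and>
           loewner_le (gram W Mx T x) ((1 + \<epsilon>) *\<^sub>R integral\<^sup>L M (gram W Mx T))} \<ge> 1 - \<delta>'"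
    and "0 < \<delta>" and "\<delta> < 1"
  shows "measure M {x \<in> space M. invertible (gram W Mx T x) \<and>
           A_norm (gram W Mx T x) (\<theta> - ols W Mx y T x)
             \<le> cw * sqrt (2 * real CARD('n) * ln (2 / (1 - \<epsilon>)) + 4 * ln (1 / \<delta>))}
         \<ge> 1 - (\<delta> + \<delta>')"
proof -
  interpret ols_setup M T Mx y w \<theta> W cw
    unfolding ols_setup_def using assms(1-7) by blast
  show ?thesis
    using main[OF assms(8) assms(9) assms(10) assms(11) assms(14) assms(13) assms(15) assms(16)] .
qed

end
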